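(* If $\mathcal{O}$ contains only Scott-open modalities, then for $R\subseteq X\times Y$: (1) if $R$ is reflexive (so $X=Y$), then for all $t,r\in TX$, $t\le r$ implies $t\,\mathcal{O}(R)\,r$; (2) for any ascending sequences $u_0\le u_1\le\dots$ in $TX$ and $v_0\le v_1\le\dots$ in $TY$, if $u_n\,\mathcal{O}(R)\,v_n$ for all $n$, then $(\bigsqcup_n u_n)\,\mathcal{O}(R)\,(\bigsqcup_n v_n)$.
   Context: $\Sigma$ is a signature of effect operations with arities $\alpha^n\to\alpha$, $\mathbf{N}\times\alpha^n\to\alpha$, $\alpha^{\mathbf{N}}\to\alpha$ or $\mathbf{N}\times\alpha^{\mathbf{N}}\to\alpha$. $TX$ is the set of possibly infinite labelled trees with leaves $\bot$ or elements of $X$ and internal nodes labelled by operations (or $\sigma_m$, $m\in\mathbb{N}$) with children according to arity; $t\le t'$ iff $t$ is obtained from $t'$ by replacing (possibly infinitely many) subtrees with $\bot$-leaves; this is an $\omega$-complete partial order with suprema $\bigsqcup$. $\mathbf{1}=\{*\}$. A set $\mathcal{O}$ of modalities is given with $[\![o]\!]\subseteq T\mathbf{1}$; $o$ is Scott-open if $[\![o]\!]$ is upward closed under $\le$ and whenever $t_1\le t_2\le\dots$ has $\bigsqcup_i t_i\in[\![o]\!]$, some $t_n\in[\![o]\!]$. $t[\in P]\in T\mathbf{1}$ replaces leaves in $P$ by $*$ and other $X$-leaves by $\bot$; $o(A)=\{t\in TX\mid t[\in A]\in[\![o]\!]\}$. $R[A]=\{y\mid\exists x\in A,\ xRy\}$;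 $\mathcal{O}$-relator: $t\,\mathcal{O}(R)\,t'$ iff $\forall A\subseteq X\ \forall o\in\mathcal{O}$, $t\in o(A)\Rightarrow t'\in o(R[A])$. *)

theory Defs
  imports Main
begin

text \<open>The labels 'l are the
  (parametrised) operation symbols of the signature: an operation of arity
  N x alpha^n contributes one label (op, m) for each m, etc.  The arity of a label
  is Some n (n children) or None (countably many children, indexed by nat).\<close>

datatype ('l, 'x) node = Bot | Leaf 'x | Node 'l

text \<open>A tree is represented by its map from positions (paths of child indices)
  to node contents; None means the position does not occur in the tree.\<close>

type_synonym ('l, 'x) tree = "nat list \<Rightarrow> ('l, 'x) node option"

definition child_ok :: "('l \<Rightarrow> nat option) \<Rightarrow> 'l \<Rightarrow> nat \<Rightarrow> bool" where
  "child_ok ar l i = (case ar l of None \<Rightarrow> True | Some n \<Rightarrow> i < n)"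

definition wf_tree :: "('l \<Rightarrow> nat option) \<Rightarrow> ('l, 'x) tree \<Rightarrow> bool" where
  "wf_tree ar t \<longleftrightarrow>
     t [] \<noteq> None \<and>
     (\<forall>p i. t (p @ [i]) \<noteq> None \<longleftrightarrow> (\<exists>l. t p = Some (Node l) \<and> child_ok ar l i))"

definition trees :: "('l \<Rightarrow> nat option) \<Rightarrow> ('l, 'x) tree set" where
  "trees ar = {t. wf_tree ar t}"

text \<open>t \<le> t': t is obtained from t' by replacing subtrees with bottom leaves.\<close>
definition tree_le :: "('l, 'x) tree \<Rightarrow> ('l, 'x) tree \<Rightarrow> bool" where
  "tree_le t t' \<longleftrightarrow> (\<forall>p v. t p = Some v \<longrightarrow> v = Bot \<or> t' p = Some v)"

definition is_tree_lub :: "('l \<Rightarrow> nat option) \<Rightarrow> (nat \<Rightarrow> ('l, 'x) tree) \<Rightarrow> ('l, 'x) tree \<Rightarrow> bool" where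
  "is_tree_lub ar us s \<longleftrightarrow> s \<in> trees ar \<and> (\<forall>n. tree_le (us n) s) \<and>
     (\<forall>s'\<in>trees ar. (\<forall>n. tree_le (us n) s') \<longrightarrow> tree_le s s')"

definition tree_sup :: "('l \<Rightarrow> nat option) \<Rightarrow> (nat \<Rightarrow> ('l, 'x) tree) \<Rightarrow> ('l, 'x) tree" where
  "tree_sup ar us = (THE s. is_tree_lub ar us s)"

definition tree_chain :: "('l \<Rightarrow> nat option) \<Rightarrow> (nat \<Rightarrow> ('l, 'x) tree) \<Rightarrow> bool" where
  "tree_chain ar us \<longleftrightarrow> (\<forall>n. us n \<in> trees ar) \<and> (\<forall>n. tree_le (us n) (us (Suc n)))"

definition scott_open :: "('l \<Rightarrow> nat option) \<Rightarrow> ('l, unit) tree set \<Rightarrow> bool" where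
  "scott_open ar S \<longleftrightarrow>
     (\<forall>t\<in>S. \<forall>t'\<in>trees ar. tree_le t t' \<longrightarrow> t' \<in> S) \<and>
     (\<forall>ts. tree_chain ar ts \<longrightarrow> tree_sup ar ts \<in> S \<longrightarrow> (\<exists>n. ts n \<in> S))"

definition mark :: "('l, 'x) tree \<Rightarrow> 'x set \<Rightarrow> ('l, unit) tree" where
  "mark t P = (\<lambda>p. map_option
      (\<lambda>v. case v of Bot \<Rightarrow> Bot | Leaf x \<Rightarrow> (if x \<in> P then Leaf () else Bot) | Node l \<Rightarrow> Node l)
      (t p))"

definition mod_set :: "('l \<Rightarrow> nat option) \<Rightarrow> ('o \<Rightarrow> ('l, unit) tree set) \<Rightarrow> 'o \<Rightarrow> 'x set
    \<Rightarrow> ('l, 'x) tree set" where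
  "mod_set ar sem m A = {t \<in> trees ar. mark t A \<in> sem m}"

definition relator :: "('l \<Rightarrow> nat option) \<Rightarrow> 'o set \<Rightarrow> ('o \<Rightarrow> ('l, unit) tree set)
    \<Rightarrow> ('x \<times> 'y) set \<Rightarrow> ('l, 'x) tree \<Rightarrow> ('l, 'y) tree \<Rightarrow> bool" where
  "relator ar Os sem R t t' \<longleftrightarrow>
     (\<forall>A. \<forall>m\<in>Os. t \<in> mod_set ar sem m A \<longrightarrow> t' \<in> mod_set ar sem m (R `` A))"

end

theory Submission
  imports Defs
begin

lemma tree_le_trans: "tree_le a b \<Longrightarrow> tree_le b c \<Longrightarrow> tree_le a c"
  unfolding tree_le_def by metis

lemma tree_le_refl: "tree_le a a"
  unfolding tree_le_def by auto

lemma chain_mono: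
  assumes "tree_chain ar u" "m \<le> n" shows "tree_le (u m) (u n)"
  using assms(2)
proof (induction n rule: dec_induct)
  case base then show ?case by (rule tree_le_refl)
next
  case (step n) then show ?case using assms(1) tree_le_trans unfolding tree_chain_def by blast
qed

lemma dom_mono:
  assumes "wf_tree ar t" "wf_tree ar t'" "tree_le t t'"
  shows "t p \<noteq> None \<Longrightarrow> t' p \<noteq> None"
proof (induction p rule: rev_induct)
  case Nil then show ?case using assms(2) unfolding wf_tree_def by auto
next
  case (snoc i p)
  then obtain l where l: "t p = Some (Node l)" "child_ok ar l i" using assms(1) unfolding wf_tree_def by blast
  then have "t' p = Some (Node l)" using assms(3) unfolding tree_le_def by blast
  then show ?case using l assms(2) unfolding wf_tree_def by blast
qed

lemma tree_le_antisym:
  assumes "wf_tree ar t" "wf_tree ar t'" "tree_le t t'" "tree_le t' t"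
  shows "t = t'"
proof
  fix p
  show "t p = t' p"
  proof (cases "t p")
    case None
    then show ?thesis using dom_mono[OF assms(2,1,4), of p] by (cases "t' p") auto
  next
    case (Some w)
    then obtain w' where w': "t' p = Some w'" using dom_mono[OF assms(1,2,3), of p] by auto
    show ?thesis using Some w' assms(3,4) unfolding tree_le_def by (metis option.inject)
  qed
qed

lemma lub_unique:
  assumes "is_tree_lub ar us s" shows "tree_sup ar us = s"
  unfolding tree_sup_def
proof (rule the_equality)
  show "is_tree_lub ar us s" by fact
  fix s' assume "is_tree_lub ar us s'"
  then show "s' = s" using assms tree_le_antisym unfolding is_tree_lub_def trees_def by blast
qed

definition good :: "('l,'x) node option \<Rightarrow> bool" where
  "good x \<longleftrightarrow> x \<noteq> None \<and> x \<noteq> Some Bot"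

definition lubf :: "(nat \<Rightarrow> ('l, 'x) tree) \<Rightarrow> ('l, 'x) tree" where
  "lubf u p = (if \<exists>n. good (u n p) then u (SOME n. good (u n p)) p
     else if \<exists>n. u n p \<noteq> None then Some Bot else None)"

lemma consist:
  assumes "tree_chain ar u" "good (u m p)" "good (u n p)"
  shows "u m p = u n p"
proof (cases "m \<le> n")
  case True
  then show ?thesis using chain_mono[OF assms(1) True] assms(2) unfolding tree_le_def good_def by force
next
  case False
  then have nm: "n \<le> m" by simp
  then show ?thesis using chain_mono[OF assms(1) nm] assms(3) unfolding tree_le_def good_def by force
qed

lemma lubf_good:
  assumes "tree_chain ar u" "good (u n p)" shows "lubf u p = u n p"
proof -
  have "good (u (SOME n. good (u n p)) p)" using assms(2) by (metis someI)
  then show ?thesis unfolding lubf_def using assms consist by metis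
qed

lemma lubf_cases:
  assumes "tree_chain ar u" "lubf u p = Some w"
  shows "(w \<noteq> Bot \<and> (\<exists>n. u n p = Some w)) \<or> (w = Bot \<and> (\<exists>n. u n p \<noteq> None))"
proof (cases "\<exists>n. good (u n p)")
  case True
  then obtain n where n: "good (u n p)" by blast
  then have "lubf u p = u n p" using lubf_good assms(1) by blast
  then show ?thesis using n assms(2) unfolding good_def by auto
next
  case False
  then have "lubf u p = (if \<exists>n. u n p \<noteq> None then Some Bot else None)"
    unfolding lubf_def by simp
  then show ?thesis using assms(2) by (auto split: if_splits)
qed

lemma lubf_None: "lubf u p = None \<longleftrightarrow> (\<forall>n. u n p = None)"
proof (cases "\<exists>n. good (u n p)")
  case True
  then have "good (u (SOME n. good (u n p)) p)" by (metis someI)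
  then show ?thesis using True unfolding lubf_def good_def by auto
next
  case False
  then show ?thesis unfolding lubf_def by auto
qed

lemma lubf_Node:
  assumes "tree_chain ar u"
  shows "lubf u p = Some (Node l) \<longleftrightarrow> (\<exists>n. u n p = Some (Node l))"
proof
  assume "lubf u p = Some (Node l)"
  then show "\<exists>n. u n p = Some (Node l)" using lubf_cases[OF assms] by blast
next
  assume "\<exists>n. u n p = Some (Node l)"
  then obtain n where "u n p = Some (Node l)" by blast
  moreover then have "good (u n p)" unfolding good_def by auto
  ultimately show "lubf u p = Some (Node l)" using lubf_good[OF assms] by metis
qed

lemma lubf_lub:
  assumes ch: "tree_chain ar u" shows "is_tree_lub ar u (lubf u)"
proof -
  have wf: "\<And>n. wf_tree ar (u n)" using ch unfolding tree_chain_def trees_def by blast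
  have "wf_tree ar (lubf u)"
    unfolding wf_tree_def
  proof (intro conjI allI)
    show "lubf u [] \<noteq> None" using wf[of 0] unfolding lubf_None wf_tree_def by auto
  next
    fix p i
    have "lubf u (p @ [i]) \<noteq> None \<longleftrightarrow> (\<exists>n. u n (p @ [i]) \<noteq> None)" using lubf_None by metis
    also have "\<dots> \<longleftrightarrow> (\<exists>n l. u n p = Some (Node l) \<and> child_ok ar l i)" using wf unfolding wf_tree_def by blast
    also have "\<dots> \<longleftrightarrow> (\<exists>l. lubf u p = Some (Node l) \<and> child_ok ar l i)" using lubf_Node[OF ch] by blast
    finally show "lubf u (p @ [i]) \<noteq> None \<longleftrightarrow> (\<exists>l. lubf u p = Some (Node l) \<and> child_ok ar l i)" .
  qed
  moreover have "\<forall>n. tree_le (u n) (lubf u)"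
    unfolding tree_le_def
  proof (intro allI impI)
    fix n p v assume "u n p = Some v"
    then show "v = Bot \<or> lubf u p = Some v" using lubf_good[OF ch, of n p] unfolding good_def by auto
  qed
  moreover have "\<forall>s'\<in>trees ar. (\<forall>n. tree_le (u n) s') \<longrightarrow> tree_le (lubf u) s'"
    unfolding tree_le_def using lubf_cases[OF ch] by blast
  ultimately show ?thesis unfolding is_tree_lub_def trees_def by blast
qed

lemma sup_eq: "tree_chain ar u \<Longrightarrow> tree_sup ar u = lubf u"
  using lubf_lub lub_unique by blast

definition fm :: "'x set \<Rightarrow> ('l,'x) node \<Rightarrow> ('l, unit) node" where
  "fm P v = (case v of Bot \<Rightarrow> Bot | Leaf x \<Rightarrow> (if x \<in> P then Leaf () else Bot) | Node l \<Rightarrow> Node l)"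

lemma mark_eq: "mark t P p = map_option (fm P) (t p)"
  unfolding mark_def fm_def by simp

lemma fm_Node: "fm P w = Node l \<longleftrightarrow> w = Node l"
  unfolding fm_def by (auto split: node.splits)

lemma fm_Bot: "w = Bot \<Longrightarrow> fm P w = Bot"
  unfolding fm_def by auto

lemma mark_trees: "t \<in> trees ar \<Longrightarrow> mark t P \<in> trees ar"
  unfolding trees_def wf_tree_def mark_eq
  by (simp add: fm_Node map_option_eq_Some)

lemma mark_mono:
  assumes "tree_le t r" "P \<subseteq> Q" shows "tree_le (mark t P) (mark r Q)"
  unfolding tree_le_def mark_eq
proof (intro allI impI)
  fix p v assume "map_option (fm P) (t p) = Some v"
  then obtain w where w: "t p = Some w" "v = fm P w" by auto
  then have "w = Bot \<or> r p = Some w" using assms(1) unfolding tree_le_def by blast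
  then show "v = Bot \<or> map_option (fm Q) (r p) = Some v"
    using w assms(2) unfolding fm_def by (auto split: node.splits)
qed

lemma mark_chain: "tree_chain ar u \<Longrightarrow> tree_chain ar (\<lambda>n. mark (u n) P)"
  unfolding tree_chain_def using mark_trees mark_mono by blast

lemma mark_sup:
  assumes ch: "tree_chain ar u"
  shows "tree_sup ar (\<lambda>n. mark (u n) P) = mark (tree_sup ar u) P"
proof (rule lub_unique)
  have L: "is_tree_lub ar u (lubf u)" by (rule lubf_lub[OF ch])
  show "is_tree_lub ar (\<lambda>n. mark (u n) P) (mark (tree_sup ar u) P)"
    unfolding sup_eq[OF ch] is_tree_lub_def
  proof (intro conjI ballI allI impI)
    show "mark (lubf u) P \<in> trees ar" using L mark_trees unfolding is_tree_lub_def by blast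
  next
    fix n show "tree_le (mark (u n) P) (mark (lubf u) P)"
      using L mark_mono unfolding is_tree_lub_def by blast
  next
    fix s' assume "s' \<in> trees ar" and ub: "\<forall>n. tree_le (mark (u n) P) s'"
    show "tree_le (mark (lubf u) P) s'"
      unfolding tree_le_def
    proof (intro allI impI)
      fix p v assume "mark (lubf u) P p = Some v"
      then obtain w where w: "lubf u p = Some w" "v = fm P w" unfolding mark_eq by auto
      show "v = Bot \<or> s' p = Some v"
      proof (cases "w = Bot")
        case True then show ?thesis using w fm_Bot by blast
      next
        case False
        then obtain n where "u n p = Some w" using lubf_cases[OF ch w(1)] by blast
        then have "mark (u n) P p = Some v" using w unfolding mark_eq by simp
        then show ?thesis using ub unfolding tree_le_def by blast
      qed
    qed
  qed
qed

theorem lemma5p9: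
  fixes ar :: "'l \<Rightarrow> nat option"
    and Os :: "'o set"
    and sem :: "'o \<Rightarrow> ('l, unit) tree set"
  assumes sem_T1: "\<forall>m\<in>Os. sem m \<subseteq> trees ar"
    and scott: "\<forall>m\<in>Os. scott_open ar (sem m)"
  shows "(\<forall>(R :: ('x \<times> 'x) set). refl R \<longrightarrow>
            (\<forall>t\<in>trees ar. \<forall>r\<in>trees ar. tree_le t r \<longrightarrow> relator ar Os sem R t r))
       \<and> (\<forall>(R :: ('x \<times> 'y) set) (u :: nat \<Rightarrow> ('l, 'x) tree) (v :: nat \<Rightarrow> ('l, 'y) tree).
            tree_chain ar u \<longrightarrow> tree_chain ar v \<longrightarrow> (\<forall>n. relator ar Os sem R (u n) (v n)) \<longrightarrow>
            relator ar Os sem R (tree_sup ar u) (tree_sup ar v))"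
proof (intro conjI allI impI ballI)
  fix R :: "('x \<times> 'x) set" and t r :: "('l, 'x) tree"
  assume "refl R" "t \<in> trees ar" "r \<in> trees ar" "tree_le t r"
  show "relator ar Os sem R t r"
    unfolding relator_def
  proof (intro allI ballI impI)
    fix A m assume m: "m \<in> Os" and "t \<in> mod_set ar sem m A"
    then have tm: "mark t A \<in> sem m" unfolding mod_set_def by auto
    have "A \<subseteq> R `` A" using \<open>refl R\<close> unfolding refl_on_def by blast
    then have "tree_le (mark t A) (mark r (R `` A))" using mark_mono \<open>tree_le t r\<close> by blast
    then have "mark r (R `` A) \<in> sem m"
      using scott m tm mark_trees[OF \<open>r \<in> trees ar\<close>] unfolding scott_open_def by blast
    then show "r \<in> mod_set ar sem m (R `` A)" using \<open>r \<in> trees ar\<close> unfolding mod_set_def by auto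
  qed
next
  fix R :: "('x \<times> 'y) set" and u :: "nat \<Rightarrow> ('l, 'x) tree" and v :: "nat \<Rightarrow> ('l, 'y) tree"
  assume cu: "tree_chain ar u" and cv: "tree_chain ar v" and rel: "\<forall>n. relator ar Os sem R (u n) (v n)"
  show "relator ar Os sem R (tree_sup ar u) (tree_sup ar v)"
    unfolding relator_def
  proof (intro allI ballI impI)
    fix A m assume m: "m \<in> Os" and "tree_sup ar u \<in> mod_set ar sem m A"
    then have "mark (tree_sup ar u) A \<in> sem m" unfolding mod_set_def by auto
    then have "tree_sup ar (\<lambda>n. mark (u n) A) \<in> sem m" using mark_sup[OF cu] by simp
    then obtain n where n: "mark (u n) A \<in> sem m"
      using scott m mark_chain[OF cu] unfolding scott_open_def by blast
    have "u n \<in> trees ar" using cu unfolding tree_chain_def by blast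
    then have "u n \<in> mod_set ar sem m A" using n unfolding mod_set_def by auto
    then have "v n \<in> mod_set ar sem m (R `` A)" using rel m unfolding relator_def by blast
    then have vn: "mark (v n) (R `` A) \<in> sem m" unfolding mod_set_def by auto
    have L: "is_tree_lub ar v (tree_sup ar v)" using lubf_lub[OF cv] sup_eq[OF cv] by simp
    then have st: "tree_sup ar v \<in> trees ar" and le: "tree_le (v n) (tree_sup ar v)"
      unfolding is_tree_lub_def by auto
    have "mark (tree_sup ar v) (R `` A) \<in> sem m"
      using scott m vn mark_trees[OF st] mark_mono[OF le order_refl] unfolding scott_open_def by blast
    then show "tree_sup ar v \<in> mod_set ar sem m (R `` A)" using st unfolding mod_set_def by auto
  qed
qed

end
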